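(* Let $N\ge2$ and let $GHZ_N=|GHZ_N\rangle\langle GHZ_N|$ with $|GHZ_N\rangle=\frac{1}{\sqrt2}(|0\rangle^{\otimes N}+|1\rangle^{\otimes N})$. Then $C_S(GHZ_N)\ge\lceil\frac{N+1}{2}\rceil$.
   Context: $\mathbb{I},\sigma_X,\sigma_Y,\sigma_Z$ are the identity and Pauli matrices. The notation $\sum_\pi \mathbb{I}^{\otimes j}\otimes A^{\otimes (N-j)}$ denotes the sum, over all distinct placements, of tensor products in which exactly $j$ of the $N$ factors are $\mathbb{I}$ and the other $N-j$ are $A$ (each distinct arrangement counted once). Measurement complexity: for an $N$-qubit permutation-invariant operator $\rho$, $C_S(\rho)$ is the minimal $n_A$ such that there exist real $b_i,c_i,d_i$ and real $\alpha_{ij}$ ($1\le i\le n_A$, $0\le j\le N$) with $\rho=\sum_{i=1}^{n_A}\sum_{j=0}^{N}\alpha_{ij}\sum_\pi\mathbb{I}^{\otimes j}\otimes A_i^{\otimes(N-j)}$, $A_i=b_i\sigma_X+c_i\sigma_Y+d_i\sigma_Z$. *)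

theory Defs
  imports Complex_Main
begin

text \<open>Single-qubit operators: 2x2 complex matrices indexed by basis states,
  False = |0>, True = |1>.  N-qubit operators: functions on pairs of
  computational basis strings (bool lists); only strings of length N matter.\<close>

type_synonym qop = "bool \<Rightarrow> bool \<Rightarrow> complex"
type_synonym nop = "bool list \<Rightarrow> bool list \<Rightarrow> complex"

definition id1 :: qop where
  "id1 a b = (if a = b then 1 else 0)"

definition sigmaX :: qop where
  "sigmaX a b = (if a \<noteq> b then 1 else 0)"

definition sigmaY :: qop where
  "sigmaY a b = (if a = b then 0 else if a then \<i> else - \<i>)"

definition sigmaZ :: qop where
  "sigmaZ a b = (if a \<noteq> b then 0 else if a then -1 else 1)"

definition pauli_comb :: "real \<Rightarrow> real \<Rightarrow> real \<Rightarrow> qop" where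
  "pauli_comb b c d x y =
     of_real b * sigmaX x y + of_real c * sigmaY x y + of_real d * sigmaZ x y"

definition tensor :: "nat \<Rightarrow> (nat \<Rightarrow> qop) \<Rightarrow> nop" where
  "tensor N M x y = (\<Prod>k<N. M k (x ! k) (y ! k))"

text \<open>\<Sum>_\<pi> I^{\<otimes> j} \<otimes> A^{\<otimes>(N-j)}: sum over the sets S of positions
  (|S| = j) carrying the identity; each distinct arrangement counted once.\<close>
definition sym_sum :: "nat \<Rightarrow> nat \<Rightarrow> qop \<Rightarrow> nop" where
  "sym_sum N j A x y =
     (\<Sum>S\<in>{S. S \<subseteq> {..<N} \<and> card S = j}.
        tensor N (\<lambda>k. if k \<in> S then id1 else A) x y)"

definition has_decomp :: "nat \<Rightarrow> nop \<Rightarrow> nat \<Rightarrow> bool" where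
  "has_decomp N \<rho> n \<longleftrightarrow>
     (\<exists>(b::nat \<Rightarrow> real) (c::nat \<Rightarrow> real) (d::nat \<Rightarrow> real) (\<alpha>::nat \<Rightarrow> nat \<Rightarrow> real).
        \<forall>x y. length x = N \<longrightarrow> length y = N \<longrightarrow>
          \<rho> x y = (\<Sum>i<n. \<Sum>j\<le>N.
                     of_real (\<alpha> i j) * sym_sum N j (pauli_comb (b i) (c i) (d i)) x y))"

definition meas_complexity :: "nat \<Rightarrow> nop \<Rightarrow> nat" where
  "meas_complexity N \<rho> = (LEAST n. has_decomp N \<rho> n)"

definition ghz_vec :: "nat \<Rightarrow> bool list \<Rightarrow> complex" where
  "ghz_vec N x = (if x = replicate N False \<or> x = replicate N True
                  then of_real (1 / sqrt 2) else 0)"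

definition GHZ :: "nat \<Rightarrow> nop" where
  "GHZ N x y = ghz_vec N x * cnj (ghz_vec N y)"

end

theory Submission imports Defs "HOL-Computational_Algebra.Polynomial" "HOL-Library.Real_Mod" begin

lemma sym_sum_tensor:
  assumes "S \<subseteq> {..<N}"
  shows "tensor N (\<lambda>k. if k \<in> S then id1 else A) x y
     = (\<Prod>k\<in>S. id1 (x!k) (y!k)) * (\<Prod>k\<in>{..<N}-S. A (x!k) (y!k))"
proof -
  have "tensor N (\<lambda>k. if k \<in> S then id1 else A) x y
     = (\<Prod>k<N. if k \<in> S then id1 (x!k) (y!k) else A (x!k) (y!k))"
    unfolding tensor_def by (intro prod.cong) auto
  also have "\<dots> = (\<Prod>k\<in>{..<N} \<inter> {k. k\<in>S}. id1 (x!k) (y!k)) * (\<Prod>k\<in>{..<N} \<inter> - {k. k\<in>S}. A (x!k) (y!k))"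
    by (rule prod.If_cases) simp
  also have "{..<N} \<inter> {k. k\<in>S} = S" using assms by auto
  also have "{..<N} \<inter> - {k. k\<in>S} = {..<N} - S" by auto
  finally show ?thesis .
qed

lemma sum_sym_sum:
  "(\<Sum>j\<le>N. sym_sum N j A x y) = tensor N (\<lambda>k a b. id1 a b + A a b) x y"
proof -
  let ?g = "\<lambda>S. (\<Prod>k\<in>S. id1 (x!k) (y!k)) * (\<Prod>k\<in>{..<N}-S. A (x!k) (y!k))"
  have "tensor N (\<lambda>k a b. id1 a b + A a b) x y = (\<Sum>S\<in>Pow {..<N}. ?g S)"
    unfolding tensor_def by (rule prod_add) simp
  also have "Pow {..<N} = (\<Union>j\<in>{..N}. {S. S \<subseteq> {..<N} \<and> card S = j})"
    by (auto intro: card_mono[of "{..<N}", simplified])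
  also have "(\<Sum>S\<in>(\<Union>j\<in>{..N}. {S. S \<subseteq> {..<N} \<and> card S = j}). ?g S)
      = (\<Sum>j\<le>N. \<Sum>S\<in>{S. S \<subseteq> {..<N} \<and> card S = j}. ?g S)"
    by (rule sum.UNION_disjoint) auto
  also have "\<dots> = (\<Sum>j\<le>N. sym_sum N j A x y)"
    unfolding sym_sum_def by (intro sum.cong refl) (simp add: sym_sum_tensor)
  finally show ?thesis by simp
qed

lemma sym_sum_0: "sym_sum N 0 A x y = tensor N (\<lambda>k. A) x y"
proof -
  have "{S. S \<subseteq> {..<N} \<and> card S = 0} = {{}}"
    by (auto dest: finite_subset[of _ "{..<N}"])
  thus ?thesis unfolding sym_sum_def by simp
qed

lemma alg:
  fixes a w :: "nat \<Rightarrow> complex"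
  assumes N: "N \<ge> 1"
  and s: "\<And>m. m \<le> N \<Longrightarrow> (\<Sum>i<n. a i * (w i ^ (N - m) * cnj (w i) ^ m))
           = (if m = 0 \<or> m = N then 1/2 else 0)"
  shows "N \<le> n"
proof (rule ccontr)
  assume "\<not> N \<le> n"
  hence nN: "n < N" by simp
  define I where "I = {i. i < n \<and> w i \<noteq> 0}"
  define \<rho> where "\<rho> i = cnj (w i) / w i" for i
  have finI: "finite I" unfolding I_def by simp
  have h1: "(\<Sum>i\<in>I. a i * w i ^ N * \<rho> i ^ m) = (if m = 0 \<or> m = N then 1/2 else 0)"
    if m: "m \<le> N" for m
  proof -
    have "(\<Sum>i<n. a i * (w i ^ (N - m) * cnj (w i) ^ m)) = (\<Sum>i\<in>I. a i * w i ^ N * \<rho> i ^ m)"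
    proof (rule sum.mono_neutral_cong_right)
      show "I \<subseteq> {..<n}" unfolding I_def by auto
      show "\<forall>i\<in>{..<n} - I. a i * (w i ^ (N - m) * cnj (w i) ^ m) = 0"
      proof
        fix i assume "i \<in> {..<n} - I"
        hence "w i = 0" unfolding I_def by auto
        thus "a i * (w i ^ (N - m) * cnj (w i) ^ m) = 0"
          using N m by (cases "m = N") auto
      qed
      show "a x * (w x ^ (N - m) * cnj (w x) ^ m) = a x * w x ^ N * \<rho> x ^ m" if "x \<in> I" for x
      proof -
        have wx: "w x \<noteq> 0" using that unfolding I_def by auto
        have "w x ^ N = w x ^ (N - m) * w x ^ m" using m by (simp flip: power_add)
        thus ?thesis using wx unfolding \<rho>_def by (simp add: power_divide field_simps)
      qed
    qed simp
    thus ?thesis using s[OF m] by simp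
  qed
  define Q where "Q = (\<Prod>j\<in>I. [:- \<rho> j, 1:])"
  have polyQ: "poly Q z = (\<Prod>j\<in>I. z - \<rho> j)" for z
    unfolding Q_def by (simp add: poly_prod)
  have degQ: "degree Q \<le> n"
  proof -
    have "degree Q \<le> sum (degree \<circ> (\<lambda>j. [:- \<rho> j, 1:])) I"
      unfolding Q_def by (rule degree_prod_sum_le[OF finI])
    also have "\<dots> = card I" by simp
    also have "card I \<le> card {..<n}" unfolding I_def by (rule card_mono) auto
    finally show ?thesis by simp
  qed
  have polyQ2: "poly Q z = (\<Sum>k\<le>n. coeff Q k * z ^ k)" for z
  proof -
    have "poly Q z = (\<Sum>k\<le>degree Q. coeff Q k * z ^ k)" by (rule poly_altdef)
    also have "\<dots> = (\<Sum>k\<le>n. coeff Q k * z ^ k)"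
      by (rule sum.mono_neutral_left) (use degQ in \<open>auto simp: coeff_eq_0\<close>)
    finally show ?thesis .
  qed
  have "0 = (\<Sum>i\<in>I. a i * w i ^ N * poly Q (\<rho> i))"
  proof -
    have "poly Q (\<rho> i) = 0" if "i \<in> I" for i
      unfolding polyQ using that finI by (auto intro: prod_zero)
    thus ?thesis by simp
  qed
  also have "\<dots> = (\<Sum>i\<in>I. \<Sum>k\<le>n. coeff Q k * (a i * w i ^ N * \<rho> i ^ k))"
    unfolding polyQ2 by (simp add: sum_distrib_left mult_ac)
  also have "\<dots> = (\<Sum>k\<le>n. coeff Q k * (\<Sum>i\<in>I. a i * w i ^ N * \<rho> i ^ k))"
    by (subst sum.swap) (simp add: sum_distrib_left)
  also have "\<dots> = (\<Sum>k\<le>n. if k = 0 then coeff Q 0 / 2 else 0)"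
  proof (rule sum.cong[OF refl])
    fix k assume "k \<in> {..n}"
    hence "k \<le> N" "k \<noteq> N" using nN by auto
    thus "coeff Q k * (\<Sum>i\<in>I. a i * w i ^ N * \<rho> i ^ k) = (if k = 0 then coeff Q 0 / 2 else 0)"
      using h1 by auto
  qed
  also have "\<dots> = coeff Q 0 / 2" by simp
  finally have "coeff Q 0 = 0" by simp
  moreover have "coeff Q 0 = (\<Prod>j\<in>I. - \<rho> j)"
    using polyQ[of 0] by (simp add: poly_0_coeff_0)
  moreover have "(\<Prod>j\<in>I. - \<rho> j) \<noteq> 0"
    using finI unfolding I_def \<rho>_def by (simp add: prod_zero_iff)
  ultimately show False by simp
qed

lemma pc_FT: "pauli_comb b c d False True = of_real b - \<i> * of_real c"
  unfolding pauli_comb_def sigmaX_def sigmaY_def sigmaZ_def by simp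

lemma pc_TF: "pauli_comb b c d True False = of_real b + \<i> * of_real c"
  unfolding pauli_comb_def sigmaX_def sigmaY_def sigmaZ_def by simp

lemma pc_diag: "pauli_comb b c 0 a a = 0"
  unfolding pauli_comb_def sigmaX_def sigmaY_def sigmaZ_def by simp

lemma card_true_le: "card {k\<in>{..<N}. P k} \<le> N"
  using card_mono[of "{..<N}" "{k\<in>{..<N}. P k}"] by auto

lemma tensor_compl:
  assumes "length x = N"
  shows "tensor N (\<lambda>k. A) x (map Not x)
     = A False True ^ (N - card {k\<in>{..<N}. x!k}) * A True False ^ card {k\<in>{..<N}. x!k}"
proof -
  have "tensor N (\<lambda>k. A) x (map Not x) = (\<Prod>k<N. if x!k then A True False else A False True)"
    unfolding tensor_def using assms by (intro prod.cong) auto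
  also have "\<dots> = (\<Prod>k\<in>{..<N} \<inter> {k. x!k}. A True False) * (\<Prod>k\<in>{..<N} \<inter> - {k. x!k}. A False True)"
    by (rule prod.If_cases) simp
  also have "{..<N} \<inter> {k. x!k} = {k\<in>{..<N}. x!k}" by auto
  also have "{..<N} \<inter> - {k. x!k} = {..<N} - {k\<in>{..<N}. x!k}" by auto
  also have "(\<Prod>k\<in>{..<N} - {k\<in>{..<N}. x!k}. A False True) = A False True ^ (N - card {k\<in>{..<N}. x!k})"
  proof -
    have "card ({..<N} - {k\<in>{..<N}. x!k}) = N - card {k\<in>{..<N}. x!k}"
      by (subst card_Diff_subset) auto
    thus ?thesis by simp
  qed
  finally show ?thesis by (simp add: mult.commute)
qed

lemma tensor_offd_zero:
  assumes "length x = N" "length y = N" "y \<noteq> map Not x" "\<And>a. A a a = 0"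
  shows "tensor N (\<lambda>k. A) x y = 0"
proof -
  obtain k where k: "k < N" "y!k = x!k"
  proof (rule ccontr)
    assume "\<not> thesis"
    hence "\<forall>k<N. y!k \<noteq> x!k" using that by blast
    hence "y = map Not x" using assms(1,2) by (auto simp: list_eq_iff_nth_eq)
    thus False using assms(3) by simp
  qed
  have "A (x!k) (y!k) = 0" using k assms(4) by simp
  show ?thesis unfolding tensor_def
    using k \<open>A (x!k) (y!k) = 0\<close> by (intro prod_zero) (simp, rule bexI[of _ k], auto)
qed

lemma tensor_diag:
  assumes A: "\<And>a b. A a b = (if a = b0 \<and> b = b0 then 2 else 0)"
  and "length x = N" "length y = N"
  shows "tensor N (\<lambda>k. A) x y = (if x = replicate N b0 \<and> y = replicate N b0 then 2^N else 0)"
proof (cases "x = replicate N b0 \<and> y = replicate N b0")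
  case True
  hence "tensor N (\<lambda>k. A) x y = (\<Prod>k<N. 2)" unfolding tensor_def
    by (intro prod.cong) (auto simp: A)
  thus ?thesis using True by simp
next
  case False
  then obtain k where k: "k < N" "x!k \<noteq> b0 \<or> y!k \<noteq> b0"
    using assms(2,3) by (auto simp: list_eq_iff_nth_eq)
  have "tensor N (\<lambda>k. A) x y = 0" unfolding tensor_def
    by (rule prod_zero) (use k A in auto)
  thus ?thesis using False by simp
qed

lemma sym_sum_compl_pos:
  assumes "j > 0" "length x = N"
  shows "sym_sum N j A x (map Not x) = 0"
  unfolding sym_sum_def
proof (rule sum.neutral, rule ballI)
  fix S assume S: "S \<in> {S. S \<subseteq> {..<N} \<and> card S = j}"
  then obtain k where k: "k \<in> S" using assms(1) by (cases "S = {}") auto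
  have fin: "finite S" using S finite_subset[of S "{..<N}"] by auto
  have kN: "k < length x" using k S assms by auto
  have "id1 (x!k) (map Not x!k) = 0" using kN by (simp add: id1_def)
  hence "(\<Prod>k\<in>S. id1 (x!k) (map Not x!k)) = 0"
    by (intro prod_zero[OF fin]) (use k in auto)
  thus "tensor N (\<lambda>k. if k \<in> S then id1 else A) x (map Not x) = 0"
    using S by (simp add: sym_sum_tensor)
qed

lemma ghz_val:
  "GHZ N x y = (if (x = replicate N False \<or> x = replicate N True) \<and>
                   (y = replicate N False \<or> y = replicate N True) then 1/2 else 0)"
proof -
  have r: "(1 / sqrt 2) * (1 / sqrt 2) = (1/2::real)" by simp
  have "(complex_of_real (1 / sqrt 2)) * cnj (complex_of_real (1 / sqrt 2)) = of_real ((1 / sqrt 2) * (1 / sqrt 2))"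
    by (simp only: complex_cnj_complex_of_real of_real_mult)
  also have "\<dots> = 1/2" unfolding r by simp
  finally have "(complex_of_real (1 / sqrt 2)) * cnj (complex_of_real (1 / sqrt 2)) = 1/2" .
  thus ?thesis unfolding GHZ_def ghz_vec_def by auto
qed

lemma lower:
  assumes N: "N \<ge> 1" and h: "has_decomp N (GHZ N) n"
  shows "N \<le> n"
proof -
  obtain b c d \<alpha> where dec: "\<forall>x y. length x = N \<longrightarrow> length y = N \<longrightarrow>
          GHZ N x y = (\<Sum>i<n. \<Sum>j\<le>N.
                     of_real (\<alpha> i j) * sym_sum N j (pauli_comb (b i) (c i) (d i)) x y)"
    using h unfolding has_decomp_def by blast
  define w where "w i = of_real (b i) - \<i> * of_real (c i)" for i
  show ?thesis
  proof (rule alg[OF N])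
    fix m assume m: "m \<le> N"
    define x where "x = map (\<lambda>k. N - m \<le> k) [0..<N]"
    have lx: "length x = N" unfolding x_def by simp
    have cx: "{k\<in>{..<N}. x!k} = {N-m..<N}" unfolding x_def by auto
    have cardx: "card {k\<in>{..<N}. x!k} = m" unfolding cx using m by simp
    have x0: "x = replicate N False \<longleftrightarrow> m = 0"
    proof
      assume "x = replicate N False"
      hence "{k\<in>{..<N}. x!k} = {}" by auto
      thus "m = 0" using cardx by (metis card.empty)
    next
      assume "m = 0" thus "x = replicate N False" unfolding x_def
        by (auto simp: list_eq_iff_nth_eq)
    qed
    have x1: "x = replicate N True \<longleftrightarrow> m = N"
    proof
      assume "x = replicate N True"
      hence "{k\<in>{..<N}. x!k} = {..<N}" by auto
      thus "m = N" using cardx by (metis card_lessThan)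
    next
      assume "m = N" thus "x = replicate N True" unfolding x_def
        by (auto simp: list_eq_iff_nth_eq)
    qed
    have y01: "map Not x = replicate N False \<or> map Not x = replicate N True
        \<longleftrightarrow> x = replicate N True \<or> x = replicate N False"
    proof -
      have "map Not x = replicate N bb \<longleftrightarrow> x = replicate N (\<not> bb)" for bb
        using lx by (auto simp: list_eq_iff_nth_eq)
      thus ?thesis by auto
    qed
    have "GHZ N x (map Not x) = (if m = 0 \<or> m = N then 1/2 else 0)"
      unfolding ghz_val y01 x0 x1 by auto
    also have "GHZ N x (map Not x) = (\<Sum>i<n. \<Sum>j\<le>N.
                     of_real (\<alpha> i j) * sym_sum N j (pauli_comb (b i) (c i) (d i)) x (map Not x))"
      using dec lx by simp
    also have "\<dots> = (\<Sum>i<n. of_real (\<alpha> i 0) * (w i ^ (N - m) * cnj (w i) ^ m))"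
    proof (rule sum.cong[OF refl])
      fix i
      have "(\<Sum>j\<le>N. of_real (\<alpha> i j) * sym_sum N j (pauli_comb (b i) (c i) (d i)) x (map Not x))
          = (\<Sum>j\<le>N. if j = 0 then of_real (\<alpha> i 0) * sym_sum N 0 (pauli_comb (b i) (c i) (d i)) x (map Not x) else 0)"
        by (intro sum.cong refl) (auto simp: sym_sum_compl_pos lx)
      also have "\<dots> = of_real (\<alpha> i 0) * sym_sum N 0 (pauli_comb (b i) (c i) (d i)) x (map Not x)"
        by simp
      also have "\<dots> = of_real (\<alpha> i 0) * (w i ^ (N - m) * cnj (w i) ^ m)"
        unfolding sym_sum_0 tensor_compl[OF lx] cardx pc_FT pc_TF w_def by simp
      finally show "(\<Sum>j\<le>N. of_real (\<alpha> i j) * sym_sum N j (pauli_comb (b i) (c i) (d i)) x (map Not x))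
          = of_real (\<alpha> i 0) * (w i ^ (N - m) * cnj (w i) ^ m)" .
    qed
    finally show "(\<Sum>i<n. of_real (\<alpha> i 0) * (w i ^ (N - m) * cnj (w i) ^ m)) = (if m = 0 \<or> m = N then 1/2 else 0)"
      by simp
  qed
qed

lemma root_sum:
  assumes N: "N > 0" and m: "m \<le> N"
  shows "(\<Sum>l<N. cis (2 * pi * real l * real m / real N)) = (if m = 0 \<or> m = N then of_nat N else 0)"
proof -
  define z where "z = cis (2 * pi * real m / real N)"
  have zl: "cis (2 * pi * real l * real m / real N) = z ^ l" for l
    unfolding z_def DeMoivre by (simp add: field_simps)
  have zN: "z ^ N = 1"
  proof -
    have "z ^ N = cis (2 * pi * real m)" unfolding z_def DeMoivre using N by (simp add: field_simps)
    also have "\<dots> = 1" by (rule cis_multiple_2pi) simp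
    finally show ?thesis .
  qed
  show ?thesis
  proof (cases "m = 0 \<or> m = N")
    case True
    hence "z = 1" unfolding z_def using N by auto
    thus ?thesis unfolding zl using True by simp
  next
    case False
    have "z \<noteq> 1"
    proof
      assume "z = 1"
      then obtain k :: int where k: "2 * pi * real m / real N = of_int k * (2 * pi)"
        unfolding z_def cis_eq_1_iff by blast
      hence "real m = of_int k * real N" using N by (simp add: field_simps)
      hence "int m = k * int N" by (metis of_int_eq_iff of_int_mult of_int_of_nat_eq)
      moreover have "0 < m" "m < N" using False m by auto
      ultimately show False
      proof (cases "k \<le> 0")
        case True
        hence "k * int N \<le> 0" by (simp add: mult_nonpos_nonneg)
        thus False using \<open>int m = k * int N\<close> \<open>0 < m\<close> by linarith
      next
        case False
        hence "1 \<le> k" by simp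
        hence "1 * int N \<le> k * int N" by (intro mult_right_mono) auto
        thus False using \<open>int m = k * int N\<close> \<open>m < N\<close> by linarith
      qed
    qed
    thus ?thesis unfolding zl using False by (simp add: sum_gp_strict zN)
  qed
qed

lemma card_true_0:
  assumes "length x = N"
  shows "card {k\<in>{..<N}. x!k} = 0 \<longleftrightarrow> x = replicate N False"
proof -
  have "card {k\<in>{..<N}. x!k} = 0 \<longleftrightarrow> {k\<in>{..<N}. x!k} = {}" by simp
  also have "\<dots> \<longleftrightarrow> x = replicate N False" using assms by (auto simp: list_eq_iff_nth_eq)
  finally show ?thesis .
qed

lemma card_true_N:
  assumes "length x = N"
  shows "card {k\<in>{..<N}. x!k} = N \<longleftrightarrow> x = replicate N True"
proof -
  have "card {k\<in>{..<N}. x!k} = N \<longleftrightarrow> {k\<in>{..<N}. x!k} = {..<N}"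
  proof
    assume "card {k\<in>{..<N}. x!k} = N"
    thus "{k\<in>{..<N}. x!k} = {..<N}" by (intro card_subset_eq) auto
  qed simp
  also have "\<dots> \<longleftrightarrow> x = replicate N True" using assms by (auto simp: list_eq_iff_nth_eq)
  finally show ?thesis .
qed

lemma xy_part:
  assumes N: "N > 0" and lx: "length x = N" and ly: "length y = N"
  shows "(\<Sum>l<N. of_real ((-1)^l / (2 * real N)) *
            tensor N (\<lambda>k. pauli_comb (cos (pi * real l / real N)) (sin (pi * real l / real N)) 0) x y)
         = (if y = map Not x \<and> (x = replicate N False \<or> x = replicate N True) then 1/2 else 0)"
proof (cases "y = map Not x")
  case False
  thus ?thesis using tensor_offd_zero[OF lx ly False] pc_diag by simp
next
  case True
  define m where "m = card {k\<in>{..<N}. x!k}"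
  have mN: "m \<le> N" unfolding m_def by (rule card_true_le)
  have trm: "of_real ((-1)^l / (2 * real N)) *
            tensor N (\<lambda>k. pauli_comb (cos (pi * real l / real N)) (sin (pi * real l / real N)) 0) x y
       = cis (2 * pi * real l * real m / real N) / (2 * of_nat N)" for l
  proof -
    define \<theta> where "\<theta> = pi * real l / real N"
    have e1: "pauli_comb (cos \<theta>) (sin \<theta>) 0 False True = cis (- \<theta>)"
      unfolding pc_FT by (simp add: complex_eq_iff)
    have e2: "pauli_comb (cos \<theta>) (sin \<theta>) 0 True False = cis \<theta>"
      unfolding pc_TF by (simp add: complex_eq_iff)
    have sgn: "(-1::complex)^l = cis (real l * pi)"
      by (simp flip: DeMoivre)
    have "tensor N (\<lambda>k. pauli_comb (cos \<theta>) (sin \<theta>) 0) x y = cis (real (N - m) * (- \<theta>) + real m * \<theta>)"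
      unfolding True tensor_compl[OF lx] e1 e2 m_def[symmetric] DeMoivre cis_mult by simp
    hence "of_real ((-1)^l / (2 * real N)) * tensor N (\<lambda>k. pauli_comb (cos \<theta>) (sin \<theta>) 0) x y
        = cis (real l * pi + (real (N - m) * (- \<theta>) + real m * \<theta>)) / (2 * of_nat N)"
      by (simp add: sgn cis_mult[symmetric] divide_simps)
    also have "real l * pi + (real (N - m) * (- \<theta>) + real m * \<theta>) = 2 * pi * real l * real m / real N"
      unfolding \<theta>_def using N mN by (simp add: of_nat_diff field_simps)
    finally show ?thesis unfolding \<theta>_def .
  qed
  have "(\<Sum>l<N. of_real ((-1)^l / (2 * real N)) *
            tensor N (\<lambda>k. pauli_comb (cos (pi * real l / real N)) (sin (pi * real l / real N)) 0) x y)
      = (\<Sum>l<N. cis (2 * pi * real l * real m / real N)) / (2 * of_nat N)"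
    unfolding trm by (simp add: sum_divide_distrib)
  also have "\<dots> = (if m = 0 \<or> m = N then 1/2 else 0)"
    unfolding root_sum[OF N mN] using N by simp
  finally show ?thesis
    unfolding m_def card_true_0[OF lx] card_true_N[OF lx] using True by simp
qed

lemma Zp: "id1 a b + pauli_comb 0 0 1 a b = (if a = False \<and> b = False then 2 else 0)"
  unfolding id1_def pauli_comb_def sigmaX_def sigmaY_def sigmaZ_def by auto

lemma Zm: "id1 a b + pauli_comb 0 0 (-1) a b = (if a = True \<and> b = True then 2 else 0)"
  unfolding id1_def pauli_comb_def sigmaX_def sigmaY_def sigmaZ_def by auto

lemma exists_decomp:
  assumes N: "N \<ge> 1"
  shows "has_decomp N (GHZ N) (N + 2)"
  unfolding has_decomp_def
proof (intro exI allI impI)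
  fix x y :: "bool list"
  assume lx: "length x = N" and ly: "length y = N"
  define b where "b i = (if i < 2 then 0 else cos (pi * real (i - 2) / real N))" for i :: nat
  define c where "c i = (if i < 2 then 0 else sin (pi * real (i - 2) / real N))" for i :: nat
  define d where "d i = (if i = 0 then 1 else if i = 1 then -1 else (0::real))" for i :: nat
  define \<alpha> where "\<alpha> i j = (if i < 2 then 1 / 2^(N+1) else if j = 0 then (-1)^(i-2) / (2 * real N) else 0)"
    for i j :: nat
  define F where "F i = (\<Sum>j\<le>N. of_real (\<alpha> i j) * sym_sum N j (pauli_comb (b i) (c i) (d i)) x y)" for i
  define F0 where "F0 = replicate N False"
  define T0 where "T0 = replicate N True"
  have FT: "F0 \<noteq> T0" using N unfolding F0_def T0_def by (cases N) auto
  have nF: "map Not F0 = T0" and nT: "map Not T0 = F0" unfolding F0_def T0_def by simp_all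
  have c2: "complex_of_real (1 / 2^(N+1)) * 2^N = 1/2" by simp
  have "F 0 = of_real (1 / 2^(N+1)) * (\<Sum>j\<le>N. sym_sum N j (pauli_comb 0 0 1) x y)"
    unfolding F_def \<alpha>_def b_def c_def d_def by (simp add: sum_distrib_left)
  also have "\<dots> = of_real (1 / 2^(N+1)) * (if x = F0 \<and> y = F0 then 2^N else 0)"
    unfolding sum_sym_sum F0_def by (subst tensor_diag[OF _ lx ly]) (auto simp: Zp)
  finally have f0: "F 0 = (if x = F0 \<and> y = F0 then 1/2 else 0)" using c2 by simp
  have "F 1 = of_real (1 / 2^(N+1)) * (\<Sum>j\<le>N. sym_sum N j (pauli_comb 0 0 (-1)) x y)"
    unfolding F_def \<alpha>_def b_def c_def d_def by (simp add: sum_distrib_left)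
  also have "\<dots> = of_real (1 / 2^(N+1)) * (if x = T0 \<and> y = T0 then 2^N else 0)"
    unfolding sum_sym_sum T0_def by (subst tensor_diag[OF _ lx ly]) (auto simp: Zm)
  finally have f1: "F 1 = (if x = T0 \<and> y = T0 then 1/2 else 0)" using c2 by simp
  have fl: "F (Suc (Suc l)) = of_real ((-1)^l / (2 * real N)) *
            tensor N (\<lambda>k. pauli_comb (cos (pi * real l / real N)) (sin (pi * real l / real N)) 0) x y" for l
  proof -
    have "F (Suc (Suc l)) = (\<Sum>j\<le>N. if j = 0 then of_real ((-1)^l / (2 * real N)) *
            sym_sum N 0 (pauli_comb (cos (pi * real l / real N)) (sin (pi * real l / real N)) 0) x y else 0)"
      unfolding F_def \<alpha>_def b_def c_def d_def by (intro sum.cong) auto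
    thus ?thesis by (simp add: sym_sum_0)
  qed
  have "(\<Sum>i<N+2. F i) = F 0 + (F 1 + (\<Sum>l<N. F (Suc (Suc l))))"
  proof -
    have "N + 2 = Suc (Suc N)" by simp
    hence "(\<Sum>i<N+2. F i) = (\<Sum>i<Suc (Suc N). F i)" by (simp only:)
    also have "\<dots> = F 0 + (\<Sum>i<Suc N. F (Suc i))" by (rule sum.lessThan_Suc_shift)
    also have "(\<Sum>i<Suc N. F (Suc i)) = F 1 + (\<Sum>l<N. F (Suc (Suc l)))"
      by (subst sum.lessThan_Suc_shift) simp
    finally show ?thesis .
  qed
  also have "(\<Sum>l<N. F (Suc (Suc l))) = (if y = map Not x \<and> (x = F0 \<or> x = T0) then 1/2 else 0)"
    unfolding fl F0_def T0_def using N lx ly by (intro xy_part) auto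
  finally have rhs: "(\<Sum>i<N+2. F i) = (if x = F0 \<and> y = F0 then 1/2 else 0) + ((if x = T0 \<and> y = T0 then 1/2 else 0)
       + (if y = map Not x \<and> (x = F0 \<or> x = T0) then 1/2 else 0))"
    unfolding f0 f1 .
  have "GHZ N x y = (\<Sum>i<N+2. F i)"
    unfolding rhs ghz_val F0_def[symmetric] T0_def[symmetric] using FT nF nT by auto
  thus "GHZ N x y = (\<Sum>i<N + 2. \<Sum>j\<le>N. of_real (\<alpha> i j) * sym_sum N j (pauli_comb (b i) (c i) (d i)) x y)"
    unfolding F_def .
qed

theorem theorem4:
  fixes N :: nat
  assumes "N \<ge> 2"
  shows "int (meas_complexity N (GHZ N)) \<ge> \<lceil>(real N + 1) / 2\<rceil>"
proof -
  have N1: "N \<ge> 1" using assms by simp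
  have "has_decomp N (GHZ N) (meas_complexity N (GHZ N))"
    unfolding meas_complexity_def by (rule LeastI_ex) (use exists_decomp[OF N1] in blast)
  hence le: "N \<le> meas_complexity N (GHZ N)" by (rule lower[OF N1])
  have "\<lceil>(real N + 1) / 2\<rceil> \<le> int N"
    unfolding ceiling_le_iff using N1 by simp
  thus ?thesis using le by linarith
qed

end
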